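(* Let $\mathcal X,\mathcal Y$ be finite sets, $f:\mathcal X\times\mathcal Y\to\{0,1\}$, $\mu$ any distribution on $\mathcal X\times\mathcal Y$ and $0<\epsilon<1/2$. Then $\mathrm{IC}^{\mathrm{ext}}_\mu(f,1/2-\epsilon)\le2\epsilon\log(|\mathcal X||\mathcal Y|)$.
   Context: Two-party communication model: Alice gets $x$, Bob gets $y$; protocols may use public and private randomness; the transcript $\Pi$ consists of the public random string and all transmitted bits; the output $\pi(x,y)$ is determined by the transcript. For $(X,Y)\sim\mu$, $\mathrm{IC}^{\mathrm{ext}}_\mu(\pi)=I(\Pi;XY)$ (logs base 2). A protocol performs $[f,\eta]$ if $\Pr[\pi(x,y)\ne f(x,y)]\le\eta$ for every $(x,y)$; $\mathrm{IC}^{\mathrm{ext}}_\mu(f,\eta)=\inf\{\mathrm{IC}^{\mathrm{ext}}_\mu(\pi):\pi\text{ performs }[f,\eta]\}$. *)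

theory Defs
  imports "HOL-Probability.Probability"
begin

text \<open>At an Alice node, Alice sends the bit g x ra, where x is her input and ra her private
  random string; similarly at a Bob node with Bob's input and private random string.
  The node's position in the tree encodes the transcript so far.\<close>

datatype ('x, 'y) ptree =
    Leaf bool
  | ANode "'x \<Rightarrow> nat \<Rightarrow> bool" "('x, 'y) ptree" "('x, 'y) ptree"
  | BNode "'y \<Rightarrow> nat \<Rightarrow> bool" "('x, 'y) ptree" "('x, 'y) ptree"

fun run :: "('x, 'y) ptree \<Rightarrow> 'x \<Rightarrow> 'y \<Rightarrow> nat \<Rightarrow> nat \<Rightarrow> bool list \<times> bool" where
  "run (Leaf b) x y ra rb = ([], b)"
| "run (ANode g t1 t2) x y ra rb =
     (let c = g x ra; (bs, o') = run (if c then t1 else t2) x y ra rb in (c # bs, o'))"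
| "run (BNode g t1 t2) x y ra rb =
     (let c = g y rb; (bs, o') = run (if c then t1 else t2) x y ra rb in (c # bs, o'))"

record ('x, 'y) protocol =
  pub :: "nat pmf"
  privA :: "nat pmf"
  privB :: "nat pmf"
  tree :: "nat \<Rightarrow> ('x, 'y) ptree"

definition transcript :: "('x, 'y) protocol \<Rightarrow> 'x \<Rightarrow> 'y \<Rightarrow> (nat \<times> bool list) pmf" where
  "transcript P x y =
     do { r \<leftarrow> pub P; ra \<leftarrow> privA P; rb \<leftarrow> privB P;
          return_pmf (r, fst (run (tree P r) x y ra rb)) }"

definition prot_output :: "('x, 'y) protocol \<Rightarrow> 'x \<Rightarrow> 'y \<Rightarrow> bool pmf" where
  "prot_output P x y =
     do { r \<leftarrow> pub P; ra \<leftarrow> privA P; rb \<leftarrow> privB P;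
          return_pmf (snd (run (tree P r) x y ra rb)) }"

definition performs :: "('x, 'y) protocol \<Rightarrow> ('x \<Rightarrow> 'y \<Rightarrow> bool) \<Rightarrow> real \<Rightarrow> bool" where
  "performs P f eta \<longleftrightarrow>
     (\<forall>x y. measure_pmf.prob (prot_output P x y) {b. b \<noteq> f x y} \<le> eta)"

definition mutual_info_pmf :: "('a \<times> 'b) pmf \<Rightarrow> real" where
  "mutual_info_pmf J =
     (\<Sum>\<^sub>\<infinity>(a, t)\<in>UNIV.
        (let j = pmf J (a, t) in
         if j = 0 then 0
         else j * log 2 (j / (pmf (map_pmf fst J) a * pmf (map_pmf snd J) t))))"

definition joint :: "('x \<times> 'y) pmf \<Rightarrow> ('x, 'y) protocol \<Rightarrow> (('x \<times> 'y) \<times> (nat \<times> bool list)) pmf" where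
  "joint mu P = do { (x, y) \<leftarrow> mu; t \<leftarrow> transcript P x y; return_pmf ((x, y), t) }"

definition IC_ext :: "('x \<times> 'y) pmf \<Rightarrow> ('x, 'y) protocol \<Rightarrow> real" where
  "IC_ext mu P = mutual_info_pmf (joint mu P)"

definition IC_ext_f :: "('x \<times> 'y) pmf \<Rightarrow> ('x \<Rightarrow> 'y \<Rightarrow> bool) \<Rightarrow> real \<Rightarrow> ereal" where
  "IC_ext_f mu f eta = (INF P \<in> {P. performs P f eta}. ereal (IC_ext mu P))"

end

theory Submission imports Defs begin

lemma MI:
  fixes mu :: "'a::countable pmf" and R :: "nat pmf" and T :: "nat \<Rightarrow> 'a \<Rightarrow> bool list"
  assumes fm: "finite (set_pmf mu)" and fR: "finite (set_pmf R)"
  shows "mutual_info_pmf (map_pmf (\<lambda>(a,r). (a,(r,T r a))) (pair_pmf mu R)) =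
    (\<Sum>a\<in>set_pmf mu. \<Sum>r\<in>set_pmf R. pmf mu a * pmf R r *
        log 2 (1 / measure_pmf.prob mu {a'. T r a' = T r a}))"
proof -
  define h where "h = (\<lambda>(a::'a,r). (a,(r,T r a)))"
  let ?J = "map_pmf h (pair_pmf mu R)"
  have inj: "inj h" by (auto simp: h_def inj_def)
  have pJ: "pmf ?J (h (a,r)) = pmf mu a * pmf R r" for a r
    using pmf_map_inj'[OF inj] by (simp add: pmf_pair)
  have fstJ: "map_pmf fst ?J = mu"
  proof -
    have "map_pmf fst ?J = map_pmf fst (pair_pmf mu R)"
      by (simp add: pmf.map_comp o_def h_def case_prod_beta)
    thus ?thesis by (simp add: map_fst_pair_pmf)
  qed
  have sndJ: "pmf (map_pmf snd ?J) (r, T r a) = measure_pmf.prob mu {a'. T r a' = T r a} * pmf R r" for r a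
  proof -
    have "pmf (map_pmf snd ?J) (r, T r a) = pmf (map_pmf (snd \<circ> h) (pair_pmf mu R)) (r, T r a)"
      by (simp add: pmf.map_comp)
    also have "\<dots> = measure_pmf.prob (pair_pmf mu R) ((snd \<circ> h) -` {(r, T r a)})"
      by (rule pmf_map)
    also have "(snd \<circ> h) -` {(r, T r a)} = {a'. T r a' = T r a} \<times> {r}"
      by (auto simp: h_def)
    also have "measure_pmf.prob (pair_pmf mu R) ({a'. T r a' = T r a} \<times> {r}) = measure_pmf.prob mu {a'. T r a' = T r a} * pmf R r"
      by (simp add: measure_pmf_prob_product measure_pmf_single)
    finally show ?thesis .
  qed
  have setJ: "set_pmf ?J = h ` (set_pmf mu \<times> set_pmf R)" by simp
  have finJ: "finite (set_pmf ?J)" using setJ fm fR by simp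
  define F where "F = (\<lambda>(a,t). let j = pmf ?J (a,t) in if j = 0 then 0
      else j * log 2 (j / (pmf (map_pmf fst ?J) a * pmf (map_pmf snd ?J) t)))"
  have "mutual_info_pmf ?J = infsum F UNIV" by (simp only: mutual_info_pmf_def F_def)
  also have "\<dots> = infsum F (set_pmf ?J)"
  proof (rule infsum_cong_neutral)
    fix x assume "x \<in> UNIV - set_pmf ?J"
    hence "pmf ?J x = 0" by (meson DiffD2 set_pmf_iff)
    thus "F x = 0" by (simp add: F_def case_prod_beta Let_def)
  qed auto
  also have "\<dots> = sum F (set_pmf ?J)" using finJ by simp
  also have "\<dots> = sum (F \<circ> h) (set_pmf mu \<times> set_pmf R)"
    unfolding setJ by (rule sum.reindex) (use inj in \<open>auto simp: inj_on_def inj_def\<close>)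
  also have "\<dots> = (\<Sum>a\<in>set_pmf mu. \<Sum>r\<in>set_pmf R. F (h (a,r)))"
    by (simp add: sum.cartesian_product)
  also have "\<dots> = (\<Sum>a\<in>set_pmf mu. \<Sum>r\<in>set_pmf R. pmf mu a * pmf R r *
        log 2 (1 / measure_pmf.prob mu {a'. T r a' = T r a}))"
  proof (intro sum.cong refl)
    fix a r assume a: "a \<in> set_pmf mu" and r: "r \<in> set_pmf R"
    have pa: "pmf mu a > 0" and pr: "pmf R r > 0" using a r by (auto simp: pmf_positive)
    have hr: "h (a,r) = (a, (r, T r a))" by (simp add: h_def)
    have "F (h (a,r)) = (let j = pmf mu a * pmf R r in if j = 0 then 0
      else j * log 2 (j / (pmf mu a * (measure_pmf.prob mu {a'. T r a' = T r a} * pmf R r))))"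
      unfolding F_def hr case_prod_conv using pJ[of a r] sndJ[of r a] fstJ hr by metis
    also have "\<dots> = pmf mu a * pmf R r * log 2 (1 / measure_pmf.prob mu {a'. T r a' = T r a})"
      using pa pr by (simp add: Let_def)
    finally show "F (h (a,r)) = \<dots>" .
  qed
  finally show ?thesis by (simp add: h_def)
qed


lemma entropy_le:
  fixes mu :: "'a pmf"
  assumes fin: "finite (set_pmf mu)" and cN: "real (card (set_pmf mu)) \<le> N"
  shows "(\<Sum>a\<in>set_pmf mu. pmf mu a * log 2 (1 / pmf mu a)) \<le> log 2 N"
proof -
  let ?S = "set_pmf mu"
  have ne: "?S \<noteq> {}" by (rule set_pmf_not_empty)
  have cpos: "card ?S > 0" using ne fin by (simp add: card_gt_0_iff)
  hence Npos: "N > 0" using cN by linarith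
  have s1: "(\<Sum>a\<in>?S. pmf mu a) = 1" using fin by (rule sum_pmf_eq_1) simp
  have pt: "pmf mu a * log 2 (1 / pmf mu a) \<le> pmf mu a * log 2 N + (1/N - pmf mu a) / ln 2"
    if a: "a \<in> ?S" for a
  proof -
    have p: "pmf mu a > 0" using a by (simp add: pmf_positive)
    have "log 2 (1 / pmf mu a) - log 2 N = ln (1 / (pmf mu a * N)) / ln 2"
      using p Npos by (simp add: log_def ln_div ln_mult diff_divide_distrib)
    also have "\<dots> \<le> (1 / (pmf mu a * N) - 1) / ln 2"
      by (rule divide_right_mono) (use p Npos in \<open>auto intro!: ln_le_minus_one\<close>)
    finally have "log 2 (1 / pmf mu a) - log 2 N \<le> (1 / (pmf mu a * N) - 1) / ln 2" .
    hence "pmf mu a * (log 2 (1 / pmf mu a) - log 2 N) \<le> pmf mu a * ((1 / (pmf mu a * N) - 1) / ln 2)"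
      using p by (intro mult_left_mono) auto
    also have "\<dots> = (1/N - pmf mu a) / ln 2" using p by (simp add: field_simps)
    finally show ?thesis by (simp add: algebra_simps)
  qed
  have "(\<Sum>a\<in>?S. pmf mu a * log 2 (1 / pmf mu a)) \<le> (\<Sum>a\<in>?S. pmf mu a * log 2 N + (1/N - pmf mu a) / ln 2)"
    by (rule sum_mono) (rule pt)
  also have "\<dots> = log 2 N * (\<Sum>a\<in>?S. pmf mu a) + (real (card ?S) / N - (\<Sum>a\<in>?S. pmf mu a)) / ln 2"
    by (simp add: sum.distrib sum_distrib_right sum_divide_distrib[symmetric] sum_subtractf algebra_simps)
  also have "\<dots> = log 2 N + (real (card ?S) / N - 1) / ln 2" using s1 by simp
  also have "\<dots> \<le> log 2 N"
  proof -
    have "real (card ?S) / N \<le> 1" using cN Npos by simp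
    thus ?thesis by (simp add: divide_nonpos_pos)
  qed
  finally show ?thesis .
qed

fun selA :: "'x list \<Rightarrow> ('x \<Rightarrow> ('x,'y) ptree) \<Rightarrow> ('x,'y) ptree" where
  "selA [] k = Leaf False"
| "selA (a#as) k = ANode (\<lambda>x _. x = a) (k a) (selA as k)"

fun selB :: "'y list \<Rightarrow> ('y \<Rightarrow> ('x,'y) ptree) \<Rightarrow> ('x,'y) ptree" where
  "selB [] k = Leaf False"
| "selB (b#bs) k = BNode (\<lambda>y _. y = b) (k b) (selB bs k)"

lemma run_selA:
  "x \<in> set as \<Longrightarrow> run (selA as k) x y ra rb =
     (replicate (length (takeWhile (\<lambda>a. a \<noteq> x) as)) False @ True # fst (run (k x) x y ra rb),
      snd (run (k x) x y ra rb))"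
  by (induction as) (auto simp: Let_def split: prod.split)

lemma run_selB:
  "y \<in> set bs \<Longrightarrow> run (selB bs k) x y ra rb =
     (replicate (length (takeWhile (\<lambda>b. b \<noteq> y) bs)) False @ True # fst (run (k y) x y ra rb),
      snd (run (k y) x y ra rb))"
  by (induction bs) (auto simp: Let_def split: prod.split)

lemma nth_takeWhile_idx: "x \<in> set as \<Longrightarrow> as ! length (takeWhile (\<lambda>a. a \<noteq> x) as) = x"
  by (induction as) auto

lemma unary_inj: "replicate n False @ True # L = replicate m False @ True # L' \<Longrightarrow> n = m \<and> L = L'"
proof (induction n arbitrary: m)
  case 0 thus ?case by (cases m) auto
next
  case (Suc n) thus ?case by (cases m) auto
qed

definition Rd :: "real \<Rightarrow> nat pmf" where
  "Rd d = map_pmf (\<lambda>(b,c). if b then 0 else if c then 1 else 2)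
     (pair_pmf (bernoulli_pmf d) (bernoulli_pmf (1/2)))"

lemma Rd_set: "set_pmf (Rd d) \<subseteq> {0,1,2}" by (auto simp: Rd_def split: if_splits)

lemma Rd_0: assumes "0 \<le> d" "d \<le> 1" shows "pmf (Rd d) 0 = d"
proof -
  have "pmf (Rd d) 0 = measure_pmf.prob (pair_pmf (bernoulli_pmf d) (bernoulli_pmf (1/2))) ({True} \<times> UNIV)"
    unfolding Rd_def pmf_map by (rule arg_cong[where f="measure_pmf.prob _"]) (auto split: if_splits)
  also have "\<dots> = d" using assms by (simp add: measure_pmf_prob_product measure_pmf_single)
  finally show ?thesis .
qed

lemma Rd_err: assumes "0 \<le> d" "d \<le> 1"
  shows "measure_pmf.prob (Rd d) {r. r \<noteq> 0 \<and> (r = 1) \<noteq> v} = (1 - d) / 2"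
proof -
  have "measure_pmf.prob (Rd d) {r. r \<noteq> 0 \<and> (r = 1) \<noteq> v} =
     measure_pmf.prob (pair_pmf (bernoulli_pmf d) (bernoulli_pmf (1/2))) ({False} \<times> {c. c \<noteq> v})"
    unfolding Rd_def measure_map_pmf by (rule arg_cong[where f="measure_pmf.prob _"]) (auto split: if_splits)
  also have "{c. c \<noteq> v} = {\<not> v}" by auto
  also have "measure_pmf.prob (pair_pmf (bernoulli_pmf d) (bernoulli_pmf (1/2))) ({False} \<times> {\<not> v}) = (1 - d) / 2"
    using assms by (simp add: measure_pmf_prob_product measure_pmf_single del: insert_Times_insert)
  finally show ?thesis .
qed


theorem theorem9:
  fixes f :: "'x::finite \<Rightarrow> 'y::finite \<Rightarrow> bool"
    and mu :: "('x \<times> 'y) pmf"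
    and \<epsilon> :: real
  assumes "0 < \<epsilon>" and "\<epsilon> < 1/2"
  shows "IC_ext_f mu f (1/2 - \<epsilon>) \<le> ereal (2 * \<epsilon> * log 2 (real (CARD('x) * CARD('y))))"
proof -
  obtain xs :: "'x list" where xs: "set xs = UNIV" using finite_list[of "UNIV::'x set"] by auto
  obtain ys :: "'y list" where ys: "set ys = UNIV" using finite_list[of "UNIV::'y set"] by auto
  define d where "d = 2 * \<epsilon>"
  have d0: "0 \<le> d" and d1: "d \<le> 1" using assms by (auto simp: d_def)
  define tr :: "nat \<Rightarrow> ('x,'y) ptree" where
    "tr r = (if r = 0 then selA xs (\<lambda>a. selB ys (\<lambda>b. Leaf (f a b)))
             else if r = 1 then Leaf True else Leaf False)" for r
  define P :: "('x,'y) protocol" where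
    "P = \<lparr>pub = Rd d, privA = return_pmf 0, privB = return_pmf 0, tree = tr\<rparr>"
  define T where "T r a = fst (run (tr r) (fst a) (snd a) 0 0)" for r and a :: "'x \<times> 'y"
  define ix where "ix x = length (takeWhile (\<lambda>a. a \<noteq> x) xs)" for x
  define iy where "iy y = length (takeWhile (\<lambda>b. b \<noteq> y) ys)" for y
  have run0: "run (tr 0) x y ra rb =
      (replicate (ix x) False @ True # replicate (iy y) False @ [True], f x y)" for x y ra rb
    using xs ys by (simp add: tr_def run_selA run_selB ix_def iy_def)
  have Tnz: "r \<noteq> 0 \<Longrightarrow> T r a = []" for r a by (simp add: T_def tr_def)
  have T0inj: "T 0 a' = T 0 a \<longleftrightarrow> a' = a" for a a'
  proof
    assume "T 0 a' = T 0 a"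
    hence "replicate (ix (fst a')) False @ True # replicate (iy (snd a')) False @ [True] =
           replicate (ix (fst a)) False @ True # replicate (iy (snd a)) False @ [True]"
      by (simp add: T_def run0)
    hence "ix (fst a') = ix (fst a) \<and> iy (snd a') = iy (snd a)"
      by (metis unary_inj)
    hence "xs ! ix (fst a') = xs ! ix (fst a) \<and> ys ! iy (snd a') = ys ! iy (snd a)" by simp
    thus "a' = a" using xs ys unfolding ix_def iy_def
      by (simp add: nth_takeWhile_idx prod_eq_iff)
  qed simp
  have joint: "joint mu P = map_pmf (\<lambda>(a,r). (a,(r,T r a))) (pair_pmf mu (Rd d))"
    unfolding joint_def transcript_def pair_pmf_def map_pmf_def P_def T_def
    by (simp add: bind_return_pmf bind_assoc_pmf case_prod_unfold)
  have perf: "performs P f (1/2 - \<epsilon>)"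
    unfolding performs_def
  proof (intro allI)
    fix x y
    have "prot_output P x y = map_pmf (\<lambda>r. snd (run (tr r) x y 0 0)) (Rd d)"
      unfolding prot_output_def map_pmf_def P_def by (simp add: bind_return_pmf)
    hence "measure_pmf.prob (prot_output P x y) {b. b \<noteq> f x y} =
        measure_pmf.prob (Rd d) {r. snd (run (tr r) x y 0 0) \<noteq> f x y}"
      by (simp only: measure_map_pmf) (simp add: vimage_def)
    also have "{r. snd (run (tr r) x y 0 0) \<noteq> f x y} = {r. r \<noteq> 0 \<and> (r = 1) \<noteq> f x y}"
    proof -
      have "snd (run (tr r) x y 0 0) = (if r = 0 then f x y else r = 1)" for r
        using run0[of x y 0 0] by (cases "r = 0") (auto simp: tr_def)
      thus ?thesis by auto
    qed
    also have "measure_pmf.prob (Rd d) \<dots> = (1 - d) / 2" by (rule Rd_err[OF d0 d1])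
    finally show "measure_pmf.prob (prot_output P x y) {b. b \<noteq> f x y} \<le> 1/2 - \<epsilon>"
      by (simp add: d_def)
  qed
  have fm: "finite (set_pmf mu)" by simp
  have fR: "finite (set_pmf (Rd d))" using Rd_set finite_subset by blast
  have IC: "IC_ext mu P = d * (\<Sum>a\<in>set_pmf mu. pmf mu a * log 2 (1 / pmf mu a))"
  proof -
    have "IC_ext mu P = (\<Sum>a\<in>set_pmf mu. \<Sum>r\<in>set_pmf (Rd d). pmf mu a * pmf (Rd d) r *
        log 2 (1 / measure_pmf.prob mu {a'. T r a' = T r a}))"
      unfolding IC_ext_def joint by (rule MI[OF fm fR])
    also have "\<dots> = (\<Sum>a\<in>set_pmf mu. \<Sum>r\<in>set_pmf (Rd d).
        if r = 0 then pmf mu a * pmf (Rd d) 0 * log 2 (1 / pmf mu a) else 0)"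
    proof (intro sum.cong refl)
      fix a r
      show "pmf mu a * pmf (Rd d) r * log 2 (1 / measure_pmf.prob mu {a'. T r a' = T r a}) =
        (if r = 0 then pmf mu a * pmf (Rd d) 0 * log 2 (1 / pmf mu a) else 0)"
      proof (cases "r = 0")
        case True
        thus ?thesis by (simp add: T0inj measure_pmf_single)
      next
        case False
        thus ?thesis by (simp add: Tnz)
      qed
    qed
    also have "\<dots> = (\<Sum>a\<in>set_pmf mu. pmf mu a * pmf (Rd d) 0 * log 2 (1 / pmf mu a))"
      using fR by (intro sum.cong refl) (simp add: sum.delta set_pmf_iff)
    also have "\<dots> = d * (\<Sum>a\<in>set_pmf mu. pmf mu a * log 2 (1 / pmf mu a))"
      by (simp add: Rd_0[OF d0 d1] sum_distrib_left algebra_simps)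
    finally show ?thesis .
  qed
  have card: "real (card (set_pmf mu)) \<le> real (CARD('x) * CARD('y))"
  proof -
    have "card (set_pmf mu) \<le> CARD('x \<times> 'y)" by (rule card_mono) auto
    hence "card (set_pmf mu) \<le> CARD('x) * CARD('y)" by (simp add: card_prod)
    thus ?thesis by (simp only: of_nat_le_iff)
  qed
  have "IC_ext_f mu f (1/2 - \<epsilon>) \<le> ereal (IC_ext mu P)"
    unfolding IC_ext_f_def by (rule INF_lower) (simp add: perf)
  also have "IC_ext mu P \<le> 2 * \<epsilon> * log 2 (real (CARD('x) * CARD('y)))"
    unfolding IC d_def
    by (rule mult_left_mono[OF entropy_le[OF fm card]]) (use assms in simp)
  finally show ?thesis by simp
qed

end
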